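(* Let $\tau$ be an importance-inducing cooperative game mapping and $\mathfrak E$ an expectation of contributions. Then $\mathfrak E\circ\tau$, defined by $(\mathfrak E\circ\tau)_x(f)=\mathfrak E_x(\tau_f)$, is an importance value function. If $\tau$ is unbiased (resp. derivative dependent), then so is $\mathfrak E\circ\tau$. If $\tau$ is chain-rule decomposable (resp. weakly chain-rule decomposable), then so is $\mathbf{Bz}\circ\tau$.
   Context: $X$ is a fixed finite set of $n=|X|$ variables. An assignment over $U\subseteq X$ is a map $\mathbf u:U\to\{0,1\}$; $\mathbf u;\mathbf v$ is concatenation of assignments with disjoint domains, $\mathbf u_S$ is restriction. For $S\subseteq X$ and $\mathbf u$ over $X$, $\mathbf u^{\oplus S}$ flips the values of the variables in $S$. $\mathbb B(X)$ is the set of Boolean functions $\{0,1\}^X\to\{0,1\}$, combined pointwise by $\lor,\land$ (juxtaposition), $\oplus$, negation $\overline f$; a variable $x$ also denotes $\mathbf u\mapsto\mathbf u(x)$; $f\ge g$ is pointwise. Cofactor: $f_{\mathbf v}(\mathbf u)=f(\mathbf v;\mathbf u_{X\setminus V})$ for $\mathbf v$ over $V$; $f_{x/c}$ for $V=\{x\}$. $\mathrm{dep}(f)=\{x: f_{x/1}\ne f_{x/0}\}$; $f$ is monotone in $x$ if $f_{x/1}\ge f_{x/0}$. $f^{\oplus y}(\mathbf u)=f(\mathbf u^{\oplus\{y\}})$. For a permutation $\sigma$ of $X$: $(\sigma\mathbf u)(x)=\mathbf u(\sigma^{-1}(x))$, $(\sigma f)(\mathbf u)=f(\sigma^{-1}\mathbf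 u)$. $f[x/s]=s f_{x/1}\lor\overline s f_{x/0}$; $\mathrm D_xf=f_{x/1}\oplus f_{x/0}$. Modularity: $f$ is modular in $g$ if $g$ is not constant and there are $\ell\in\mathbb B(X)$, $z\in X$ with $\mathrm{dep}(\ell)\cap\mathrm{dep}(g)=\emptyset$ and $f=\ell[z/g]$; monotonically modular if moreover $\ell$ is monotone in $z$. Then $f_{g/1}:=\ell_{z/1}$, $f_{g/0}:=\ell_{z/0}$ (well defined), and for a variable $w$, $f[g/w]:=w f_{g/1}\lor\overline w f_{g/0}$. Value functions and IVFs: a value function is a map $\mathfrak I:X\times\mathbb B(X)\to\mathbb R$. It is an importance value function (IVF) if for all $x,y\in X$, permutations $\sigma$, $f,g,h$: (Bound) $0\le\mathfrak I_x(f)\le1$; (Dum) $\mathfrak I_x(f)=0$ if $x\notin\mathrm{dep}(f)$; (Dic) $\mathfrak I_x(x)=\mathfrak I_x(\overline x)=1$; (Type) $\mathfrak I_x(f)=\mathfrak I_{\sigma(x)}(\sigma f)$ and $\mathfrak I_x(f)=\mathfrak I_x(f^{\oplus y})$; (ModEC) $\mathfrak I_x(f)\ge\mathfrak I_x(h)$ whenever $f,h$ are monotonically modular in $g$, $f_{g/1}\ge h_{g/1}$, $h_{g/0}\ge f_{g/0}$, $x\in\mathrm{dep}(g)$. Unbiased: $\mathfrak I_x(g)=\mathfrak I_x(\overline g)$. Derivative dependent: $\mathrm D_xf\ge\mathrm D_xg\Rightarrow\mathfrak I_x(f)\ge\mathfrak I_x(g)$. Chain-rule decomposable: for $f$ modular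 in $g$ and $x\in\mathrm{dep}(g)$, $\mathfrak I_x(f)=\mathfrak I_x(g)\,\mathfrak I_{x_g}(f[g/x_g])$ for a variable $x_g\notin\mathrm{dep}(f)$; weakly: only for $f$ monotonically modular in $g$. Cooperative games: a cooperative game is $v:2^X\to\mathbb R$; $\mathbb G(X)$ is the set of all of them; they are combined pointwise and compared pointwise. $\partial_xv(S)=v(S\cup\{x\})-v(S\setminus\{x\})$. A cooperative game mapping (CGM) is a map $\tau:\mathbb B(X)\to\mathbb G(X)$, $f\mapsto\tau_f$. It is importance inducing if for all $x,y\in X$, permutations $\sigma$ and $f,g,h$: (Bound$_{CG}$) $0\le\partial_x\tau_f\le1$; (Dum$_{CG}$) $\partial_x\tau_f=0$ if $x\notin\mathrm{dep}(f)$; (Dic$_{CG}$) $\partial_x\tau_x=\partial_x\tau_{\overline x}=1$; (Type$_{CG}$) $\tau_f(S)=\tau_{\sigma f}(\sigma(S))$ and $\tau_f(S)=\tau_{f^{\oplus y}}(S)$ for all $S\subseteq X$; (ModEC$_{CG}$) $\partial_x\tau_f\ge\partial_x\tau_h$ whenever $f,h$ are monotonically modular in $g$, $f_{g/1}\ge h_{g/1}$, $h_{g/0}\ge f_{g/0}$, $x\in\mathrm{dep}(g)$. $\tau$ is unbiased if $\tau_g=\tau_{\overline g}$ for all $g$; derivative dependent if $\mathrm D_xf\ge\mathrm D_xg\Rightarrow\partial_x\tau_f\ge\partial_x\tau_g$; chain-rule decomposable if for all $f$ modular in $g$ and $x\in\mathrm{dep}(g)$: $\partial_x\tau_f=(\partial_x\tau_g)(\partial_g\tau_f)$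 with $\partial_g\tau_f:=\partial_{x_g}\tau_{f[g/x_g]}$ for a variable $x_g\notin\mathrm{dep}(f)$; weakly chain-rule decomposable if this holds whenever $f$ is monotonically modular in $g$. An expectation of contributions is a map $\mathfrak E:X\times\mathbb G(X)\to\mathbb R$ for which there are nonnegative weights $c(0),\dots,c(n-1)$ with $\sum_{S\subseteq X\setminus\{x\}}c(|S|)=1$ and $\mathfrak E_x(v)=\sum_{S\subseteq X\setminus\{x\}}c(|S|)\,\partial_xv(S)$ for all $v,x$. The Banzhaf value $\mathbf{Bz}$ is the expectation of contributions with $c(k)=2^{-(n-1)}$. *)

theory Defs
  imports Complex_Main
begin

text \<open>Variables form a finite type 'x (the set X is UNIV). Assignments over X are
 maps 'x => bool; Boolean functions are ('x => bool) => bool, ordered pointwise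
 (False < True).\<close>

type_synonym 'x bfun = "('x \<Rightarrow> bool) \<Rightarrow> bool"
type_synonym 'x game = "'x set \<Rightarrow> real"

definition cof :: "'x bfun \<Rightarrow> 'x \<Rightarrow> bool \<Rightarrow> 'x bfun" where
  "cof f x c = (\<lambda>u. f (u(x := c)))"

definition dep :: "'x bfun \<Rightarrow> 'x set" where
  "dep f = {x. cof f x True \<noteq> cof f x False}"

definition monotone_in :: "'x bfun \<Rightarrow> 'x \<Rightarrow> bool" where
  "monotone_in f x \<longleftrightarrow> cof f x False \<le> cof f x True"

definition flip :: "'x bfun \<Rightarrow> 'x \<Rightarrow> 'x bfun" where
  "flip f y = (\<lambda>u. f (u(y := \<not> u y)))"

text \<open>(sigma f)(u) = f(sigma^-1 u), where (sigma^-1 u)(x) = u(sigma x).\<close>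
definition perm_bfun :: "('x \<Rightarrow> 'x) \<Rightarrow> 'x bfun \<Rightarrow> 'x bfun" where
  "perm_bfun \<sigma> f = (\<lambda>u. f (u \<circ> \<sigma>))"

definition subst :: "'x bfun \<Rightarrow> 'x \<Rightarrow> 'x bfun \<Rightarrow> 'x bfun" where
  "subst f x s = (\<lambda>u. (s u \<and> cof f x True u) \<or> (\<not> s u \<and> cof f x False u))"

definition Dx :: "'x \<Rightarrow> 'x bfun \<Rightarrow> 'x bfun" where
  "Dx x f = (\<lambda>u. cof f x True u \<noteq> cof f x False u)"

definition var :: "'x \<Rightarrow> 'x bfun" where
  "var x = (\<lambda>u. u x)"

definition nonconst :: "'x bfun \<Rightarrow> bool" where
  "nonconst g \<longleftrightarrow> (\<exists>u v. g u \<noteq> g v)"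

definition mod_witness :: "'x bfun \<Rightarrow> 'x bfun \<Rightarrow> 'x bfun \<Rightarrow> 'x \<Rightarrow> bool" where
  "mod_witness f g l z \<longleftrightarrow> dep l \<inter> dep g = {} \<and> f = subst l z g"

definition modular :: "'x bfun \<Rightarrow> 'x bfun \<Rightarrow> bool" where
  "modular f g \<longleftrightarrow> nonconst g \<and> (\<exists>l z. mod_witness f g l z)"

definition mono_modular :: "'x bfun \<Rightarrow> 'x bfun \<Rightarrow> bool" where
  "mono_modular f g \<longleftrightarrow> nonconst g \<and> (\<exists>l z. mod_witness f g l z \<and> monotone_in l z)"

text \<open>f_{g/c} := l_{z/c} for a witness (l,z) (well defined by the paper).\<close>
definition mod_cof :: "'x bfun \<Rightarrow> 'x bfun \<Rightarrow> bool \<Rightarrow> 'x bfun" where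
  "mod_cof f g c = (let w = (SOME w. mod_witness f g (fst w) (snd w)) in cof (fst w) (snd w) c)"

definition mod_subst :: "'x bfun \<Rightarrow> 'x bfun \<Rightarrow> 'x \<Rightarrow> 'x bfun" where
  "mod_subst f g w = (\<lambda>u. (u w \<and> mod_cof f g True u) \<or> (\<not> u w \<and> mod_cof f g False u))"

type_synonym 'x valfun = "'x \<Rightarrow> 'x bfun \<Rightarrow> real"

definition IVF :: "('x::finite) valfun \<Rightarrow> bool" where
  "IVF I \<longleftrightarrow>
     (\<forall>x f. 0 \<le> I x f \<and> I x f \<le> 1) \<and>
     (\<forall>x f. x \<notin> dep f \<longrightarrow> I x f = 0) \<and>
     (\<forall>x. I x (var x) = 1 \<and> I x (\<lambda>u. \<not> var x u) = 1) \<and>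
     (\<forall>x f \<sigma>. bij \<sigma> \<longrightarrow> I x f = I (\<sigma> x) (perm_bfun \<sigma> f)) \<and>
     (\<forall>x y f. I x f = I x (flip f y)) \<and>
     (\<forall>x f g h. mono_modular f g \<and> mono_modular h g \<and>
        mod_cof h g True \<le> mod_cof f g True \<and>
        mod_cof f g False \<le> mod_cof h g False \<and> x \<in> dep g \<longrightarrow> I x h \<le> I x f)"

definition unbiased :: "('x::finite) valfun \<Rightarrow> bool" where
  "unbiased I \<longleftrightarrow> (\<forall>x g. I x g = I x (\<lambda>u. \<not> g u))"

definition deriv_dependent :: "('x::finite) valfun \<Rightarrow> bool" where
  "deriv_dependent I \<longleftrightarrow> (\<forall>x f g. Dx x g \<le> Dx x f \<longrightarrow> I x g \<le> I x f)"

definition chain_rule_decomp :: "('x::finite) valfun \<Rightarrow> bool" where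
  "chain_rule_decomp I \<longleftrightarrow> (\<forall>f g x xg. modular f g \<and> x \<in> dep g \<and> xg \<notin> dep f \<longrightarrow>
      I x f = I x g * I xg (mod_subst f g xg))"

definition weak_chain_rule_decomp :: "('x::finite) valfun \<Rightarrow> bool" where
  "weak_chain_rule_decomp I \<longleftrightarrow> (\<forall>f g x xg. mono_modular f g \<and> x \<in> dep g \<and> xg \<notin> dep f \<longrightarrow>
      I x f = I x g * I xg (mod_subst f g xg))"

definition pd :: "'x \<Rightarrow> 'x game \<Rightarrow> 'x game" where
  "pd x v = (\<lambda>S. v (S \<union> {x}) - v (S - {x}))"

type_synonym 'x cgm = "'x bfun \<Rightarrow> 'x game"

definition importance_inducing :: "('x::finite) cgm \<Rightarrow> bool" where
  "importance_inducing \<tau> \<longleftrightarrow>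
     (\<forall>x f S. 0 \<le> pd x (\<tau> f) S \<and> pd x (\<tau> f) S \<le> 1) \<and>
     (\<forall>x f. x \<notin> dep f \<longrightarrow> pd x (\<tau> f) = (\<lambda>S. 0)) \<and>
     (\<forall>x. pd x (\<tau> (var x)) = (\<lambda>S. 1) \<and> pd x (\<tau> (\<lambda>u. \<not> var x u)) = (\<lambda>S. 1)) \<and>
     (\<forall>f \<sigma> S. bij \<sigma> \<longrightarrow> \<tau> f S = \<tau> (perm_bfun \<sigma> f) (\<sigma> ` S)) \<and>
     (\<forall>y f S. \<tau> f S = \<tau> (flip f y) S) \<and>
     (\<forall>x f g h. mono_modular f g \<and> mono_modular h g \<and>
        mod_cof h g True \<le> mod_cof f g True \<and>
        mod_cof f g False \<le> mod_cof h g False \<and> x \<in> dep g \<longrightarrow>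
        pd x (\<tau> h) \<le> pd x (\<tau> f))"

definition unbiased_cgm :: "('x::finite) cgm \<Rightarrow> bool" where
  "unbiased_cgm \<tau> \<longleftrightarrow> (\<forall>g. \<tau> g = \<tau> (\<lambda>u. \<not> g u))"

definition deriv_dependent_cgm :: "('x::finite) cgm \<Rightarrow> bool" where
  "deriv_dependent_cgm \<tau> \<longleftrightarrow> (\<forall>x f g. Dx x g \<le> Dx x f \<longrightarrow> pd x (\<tau> g) \<le> pd x (\<tau> f))"

definition chain_rule_decomp_cgm :: "('x::finite) cgm \<Rightarrow> bool" where
  "chain_rule_decomp_cgm \<tau> \<longleftrightarrow> (\<forall>f g x xg. modular f g \<and> x \<in> dep g \<and> xg \<notin> dep f \<longrightarrow>
      pd x (\<tau> f) = (\<lambda>S. pd x (\<tau> g) S * pd xg (\<tau> (mod_subst f g xg)) S))"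

definition weak_chain_rule_decomp_cgm :: "('x::finite) cgm \<Rightarrow> bool" where
  "weak_chain_rule_decomp_cgm \<tau> \<longleftrightarrow> (\<forall>f g x xg. mono_modular f g \<and> x \<in> dep g \<and> xg \<notin> dep f \<longrightarrow>
      pd x (\<tau> f) = (\<lambda>S. pd x (\<tau> g) S * pd xg (\<tau> (mod_subst f g xg)) S))"

definition expectation_of_contributions :: "(('x::finite) \<Rightarrow> 'x game \<Rightarrow> real) \<Rightarrow> bool" where
  "expectation_of_contributions E \<longleftrightarrow>
     (\<exists>c :: nat \<Rightarrow> real.
        (\<forall>(x::'x) S. S \<subseteq> UNIV - {x} \<longrightarrow> 0 \<le> c (card S)) \<and>
        (\<forall>x::'x. (\<Sum>S \<in> Pow (UNIV - {x}). c (card S)) = 1) \<and>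
        (\<forall>x v. E x v = (\<Sum>S \<in> Pow (UNIV - {x}). c (card S) * pd x v S)))"

definition banzhaf :: "'x::finite \<Rightarrow> 'x game \<Rightarrow> real" where
  "banzhaf x v = (\<Sum>S \<in> Pow (UNIV - {x}). (1 / 2 ^ card (UNIV - {x})) * pd x v S)"

definition comp_vf :: "('x \<Rightarrow> 'x game \<Rightarrow> real) \<Rightarrow> 'x cgm \<Rightarrow> 'x valfun" where
  "comp_vf E \<tau> = (\<lambda>x f. E x (\<tau> f))"

end

theory Submission imports Defs begin


lemma sum_Pow_insert:
  assumes "finite U" "a \<notin> U"
  shows "(\<Sum>S\<in>Pow (insert a U). (F S::real)) = (\<Sum>S\<in>Pow U. F S + F (insert a S))"
proof -
  have inj: "inj_on (insert a) (Pow U)" using assms(2) unfolding inj_on_def by (metis Diff_insert_absorb PowD subsetD)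
  have disj: "Pow U \<inter> insert a ` Pow U = {}" using assms(2) by blast
  have "(\<Sum>S\<in>Pow (insert a U). F S) = (\<Sum>S\<in>Pow U. F S) + (\<Sum>S\<in>insert a ` Pow U. F S)"
    unfolding Pow_insert using assms(1) disj by (simp add: sum.union_disjoint)
  also have "(\<Sum>S\<in>insert a ` Pow U. F S) = (\<Sum>S\<in>Pow U. F (insert a S))"
    using inj by (simp add: sum.reindex)
  finally show ?thesis by (simp add: sum.distrib)
qed

lemma indep_sum:
  fixes A B :: "'a set \<Rightarrow> real"
  assumes "finite U" "P \<inter> Q = {}"
  shows "(\<forall>S. A S = A (S \<inter> P)) \<Longrightarrow> (\<forall>S. B S = B (S \<inter> Q)) \<Longrightarrow>
    2 ^ card U * (\<Sum>S\<in>Pow U. A S * B S) = (\<Sum>S\<in>Pow U. A S) * (\<Sum>S\<in>Pow U. B S)"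
  using assms(1)
proof (induction U arbitrary: A B rule: finite_induct)
  case empty
  then show ?case by simp
next
  case (insert a U)
  define A' where "A' S = A S + A (insert a S)" for S
  define B' where "B' S = B S + B (insert a S)" for S
  have hA: "A' S = A' (S \<inter> P)" for S
  proof -
    have "A (insert a S) = A (insert a (S \<inter> P))"
      using insert.prems(1) by (metis Int_insert_left Int_insert_left_if0 Int_insert_left_if1 inf.idem inf_left_idem)
    then show ?thesis unfolding A'_def using insert.prems(1) by (metis inf.idem inf_assoc)
  qed
  have hB: "B' S = B' (S \<inter> Q)" for S
  proof -
    have "B (insert a S) = B (insert a (S \<inter> Q))"
      using insert.prems(2) by (metis Int_insert_left Int_insert_left_if0 Int_insert_left_if1 inf.idem inf_left_idem)
    then show ?thesis unfolding B'_def using insert.prems(2) by (metis inf.idem inf_assoc)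
  qed
  have e1: "(\<Sum>S\<in>Pow (insert a U). A S * B S) = (\<Sum>S\<in>Pow U. A S * B S + A (insert a S) * B (insert a S))"
    using insert.hyps by (rule sum_Pow_insert)
  have eA: "(\<Sum>S\<in>Pow (insert a U). A S) = (\<Sum>S\<in>Pow U. A' S)"
    using insert.hyps unfolding A'_def by (rule sum_Pow_insert)
  have eB: "(\<Sum>S\<in>Pow (insert a U). B S) = (\<Sum>S\<in>Pow U. B' S)"
    using insert.hyps unfolding B'_def by (rule sum_Pow_insert)
  have cardi: "card (insert a U) = Suc (card U)" using insert.hyps by simp
  show ?case
  proof (cases "a \<in> P")
    case True
    then have "a \<notin> Q" using assms(2) by blast
    then have Bi: "B (insert a S) = B S" for S using insert.prems(2)
      by (metis Int_insert_left_if0)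
    have "2 ^ card U * (\<Sum>S\<in>Pow U. A' S * B S) = (\<Sum>S\<in>Pow U. A' S) * (\<Sum>S\<in>Pow U. B S)"
      using insert.IH hA insert.prems(2) by blast
    moreover have "B' = (\<lambda>S. 2 * B S)" unfolding B'_def using Bi by (auto simp: fun_eq_iff)
    ultimately show ?thesis unfolding e1 eA eB cardi
      by (simp add: Bi A'_def sum_distrib_left[symmetric] distrib_right)
  next
    case False
    then have Ai: "A (insert a S) = A S" for S using insert.prems(1)
      by (metis Int_insert_left_if0)
    have "A' = (\<lambda>S. 2 * A S)" unfolding A'_def using Ai by (auto simp: fun_eq_iff)
    have "2 ^ card U * (\<Sum>S\<in>Pow U. A S * B' S) = (\<Sum>S\<in>Pow U. A S) * (\<Sum>S\<in>Pow U. B' S)"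
      using insert.IH hB insert.prems(1) by blast
    moreover have "(\<Sum>S\<in>Pow U. A S * 2) = 2 * (\<Sum>S\<in>Pow U. A S)" by (metis sum_distrib_right mult.commute)
    ultimately show ?thesis unfolding e1 eA eB cardi \<open>A' = _\<close>
      by (simp add: Ai B'_def distrib_left sum.distrib algebra_simps)
  qed
qed

lemma game_local:
  fixes v :: "('x::finite) game"
  assumes "\<forall>w. w \<notin> D \<longrightarrow> pd w v = (\<lambda>S. 0)"
  shows "v S = v (S \<inter> D)"
proof -
  have rm: "v T = v (T - {w})" if "w \<notin> D" for T w
  proof -
    have "pd w v = (\<lambda>S. 0)" using assms that by blast
    then have "pd w v T = 0" by simp
    then have "v (T \<union> {w}) = v (T - {w})" unfolding pd_def by simp
    then show ?thesis
      by (cases "w \<in> T") (simp_all add: insert_absorb)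
  qed
  have "\<forall>S. S - D \<subseteq> F \<longrightarrow> v S = v (S \<inter> D)" if "finite F" for F
    using that
  proof (induction F rule: finite_induct)
    case empty
    show ?case
    proof (intro allI impI)
      fix S :: "'x set" assume "S - D \<subseteq> {}"
      then have "S \<inter> D = S" by blast
      then show "v S = v (S \<inter> D)" by simp
    qed
  next
    case (insert a F)
    show ?case
    proof (intro allI impI)
      fix S assume S: "S - D \<subseteq> insert a F"
      show "v S = v (S \<inter> D)"
      proof (cases "a \<in> S \<and> a \<notin> D")
        case True
        have e1: "v S = v (S - {a})" using True by (intro rm) simp
        have "(S - {a}) - D \<subseteq> F" using S by blast
        then have e2: "v (S - {a}) = v ((S - {a}) \<inter> D)" using insert.IH by simp
        have e3: "(S - {a}) \<inter> D = S \<inter> D" using True by blast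
        show ?thesis using e1 e2 e3 by simp
      next
        case False
        then have "S - D \<subseteq> F" using S by blast
        then show ?thesis using insert.IH by simp
      qed
    qed
  qed
  from this[OF finite_UNIV] show ?thesis by blast
qed

lemma pd_local:
  fixes v :: "('x::finite) game"
  assumes "\<forall>w. w \<notin> D \<longrightarrow> pd w v = (\<lambda>S. 0)"
  shows "pd y v S = pd y v (S \<inter> D)"
proof -
  have "(S \<union> {y}) \<inter> D = ((S \<inter> D) \<union> {y}) \<inter> D" "(S - {y}) \<inter> D = ((S \<inter> D) - {y}) \<inter> D" by auto
  moreover have "v T = v (T \<inter> D)" for T by (rule game_local[OF assms])
  ultimately show ?thesis unfolding pd_def by metis
qed

lemma tau_local:
  assumes "importance_inducing \<tau>"
  shows "pd y (\<tau> f) S = pd y (\<tau> f) (S \<inter> dep f)"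
  by (rule pd_local) (use assms in \<open>auto simp: importance_inducing_def\<close>)

lemma banzhaf_full:
  fixes x :: "'x::finite"
  shows "banzhaf x v = (1 / 2 ^ card (UNIV::'x set)) * (\<Sum>S\<in>Pow UNIV. pd x v S)"
proof -
  have U: "(UNIV::'x set) = insert x (UNIV - {x})" by blast
  have c: "card (UNIV::'x set) = Suc (card (UNIV - {x}))"
  proof -
    have "card (UNIV::'x set) > 0" by (simp add: card_gt_0_iff)
    then show ?thesis by (subst U) simp
  qed
  have pdi: "pd x v (insert x S) = pd x v S" for S unfolding pd_def by simp
  have "(\<Sum>S\<in>Pow UNIV. pd x v S) = (\<Sum>S\<in>Pow (insert x (UNIV - {x})). pd x v S)"
    using U by metis
  also have "\<dots> = (\<Sum>S\<in>Pow (UNIV - {x}). pd x v S + pd x v (insert x S))"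
    by (rule sum_Pow_insert) auto
  also have "\<dots> = 2 * (\<Sum>S\<in>Pow (UNIV - {x}). pd x v S)"
    by (simp add: pdi sum_distrib_left)
  finally show ?thesis unfolding banzhaf_def c
    by (simp add: sum_distrib_left)
qed

lemma dep_upd:
  assumes "z \<notin> dep l"
  shows "l (u(z := b)) = l u"
proof -
  have "cof l z True = cof l z False" using assms unfolding dep_def by simp
  then have "cof l z True u = cof l z False u" by simp
  then have e: "l (u(z := True)) = l (u(z := False))" unfolding cof_def .
  have "l (u(z := c)) = l u" for c
  proof (cases "u z")
    case True
    then have "u(z := True) = u" by (simp add: fun_eq_iff)
    then show ?thesis using e by (cases c) auto
  next
    case False
    then have "u(z := False) = u" by (simp add: fun_eq_iff)
    then show ?thesis using e by (cases c) auto
  qed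
  then show ?thesis .
qed

lemma dep_agree:
  fixes f :: "('x::finite) bfun"
  assumes "\<forall>w\<in>dep f. u w = u' w"
  shows "f u = f u'"
proof -
  have "\<forall>u. {w. u w \<noteq> u' w} \<subseteq> F \<longrightarrow> (\<forall>w\<in>dep f. u w = u' w) \<longrightarrow> f u = f u'" if "finite F" for F
    using that
  proof (induction F rule: finite_induct)
    case empty
    show ?case
    proof (intro allI impI)
      fix u :: "'x \<Rightarrow> bool" assume "{w. u w \<noteq> u' w} \<subseteq> {}"
      then have "u = u'" by (auto simp: fun_eq_iff)
      then show "f u = f u'" by simp
    qed
  next
    case (insert a F)
    show ?case
    proof (intro allI impI)
      fix u assume u: "{w. u w \<noteq> u' w} \<subseteq> insert a F" and d: "\<forall>w\<in>dep f. u w = u' w"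
      show "f u = f u'"
      proof (cases "u a = u' a")
        case True
        then have "{w. u w \<noteq> u' w} \<subseteq> F" using u by auto
        then show ?thesis using insert.IH[rule_format, of u] d by blast
      next
        case False
        then have "a \<notin> dep f" using d by blast
        then have e1: "f u = f (u(a := u' a))" by (rule dep_upd[symmetric])
        have "{w. (u(a := u' a)) w \<noteq> u' w} \<subseteq> F" using u by auto
        moreover have "\<forall>w\<in>dep f. (u(a := u' a)) w = u' w" using d by simp
        ultimately have "f (u(a := u' a)) = f u'" using insert.IH[rule_format, of "u(a := u' a)"] by blast
        then show ?thesis using e1 by simp
      qed
    qed
  qed
  from this[OF finite_UNIV] show ?thesis using assms by blast
qed

lemma dep_g_sub_f:
  fixes f :: "('x::finite) bfun"
  assumes "dep l \<inter> dep g = {}" "f = subst l z g" "z \<in> dep l" "y \<in> dep g"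
  shows "y \<in> dep f"
proof -
  obtain u1 where u1: "l (u1(z := True)) \<noteq> l (u1(z := False))"
    using assms(3) unfolding dep_def cof_def by (auto simp: fun_eq_iff)
  obtain u2 where u2: "g (u2(y := True)) \<noteq> g (u2(y := False))"
    using assms(4) unfolding dep_def cof_def by (auto simp: fun_eq_iff)
  define u where "u w = (if w \<in> dep g then u2 w else u1 w)" for w
  have zg: "z \<notin> dep g" using assms(1,3) by blast
  have yl: "y \<notin> dep l" using assms(1,4) by blast
  have L: "l (u(y := c, z := b)) = l (u1(z := b))" for c b
    by (rule dep_agree[of l]) (use assms(1) yl in \<open>auto simp: u_def\<close>)
  have G: "g (u(y := c)) = g (u2(y := c))" for c
    by (rule dep_agree[of g]) (auto simp: u_def)
  have F: "f (u(y := c)) = (if g (u2(y := c)) then l (u1(z := True)) else l (u1(z := False)))" for c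
    unfolding assms(2) subst_def cof_def using L G by auto
  have "f (u(y := True)) \<noteq> f (u(y := False))"
    unfolding F using u1 u2 by auto
  then show ?thesis unfolding dep_def cof_def by (auto simp: fun_eq_iff)
qed

lemma dep_disj:
  fixes f :: "('x::finite) bfun"
  assumes "dep l \<inter> dep g = {}" "f = subst l z g" "xg \<notin> dep f"
    and h: "h = (\<lambda>u. (u xg \<and> cof l z True u) \<or> (\<not> u xg \<and> cof l z False u))"
  shows "dep h \<inter> dep g = {}"
proof (rule ccontr)
  assume "dep h \<inter> dep g \<noteq> {}"
  then obtain w where wh: "w \<in> dep h" and wg: "w \<in> dep g" by blast
  have wl: "w \<notin> dep l" using assms(1) wg by blast
  have nd: "h (u(w := b)) = h u" for u b
  proof (cases "z \<in> dep l")
    case True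
    then have "w \<noteq> z" using wl by blast
    moreover have "w \<noteq> xg" using dep_g_sub_f[OF assms(1,2) True wg] assms(3) by blast
    ultimately show ?thesis unfolding h cof_def
      using dep_upd[OF wl, of "u(z := True)" b] dep_upd[OF wl, of "u(z := False)" b]
      by (simp add: fun_upd_twist)
  next
    case False
    have hl: "h v = l v" for v
      unfolding h cof_def using dep_upd[OF False] by auto
    show ?thesis unfolding hl using dep_upd[OF wl] by blast
  qed
  have "cof h w True = cof h w False" unfolding cof_def
    using nd by (auto simp: fun_eq_iff)
  then show False using wh unfolding dep_def by blast
qed

lemma bz_chain:
  fixes \<tau> :: "('x::finite) cgm"
  assumes ii: "importance_inducing \<tau>"
    and pf: "pd x (\<tau> f) = (\<lambda>S. pd x (\<tau> g) S * pd xg (\<tau> h) S)"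
    and dj: "dep h \<inter> dep g = {}"
  shows "banzhaf x (\<tau> f) = banzhaf x (\<tau> g) * banzhaf xg (\<tau> h)"
proof -
  define A where "A = pd x (\<tau> g)"
  define B where "B = pd xg (\<tau> h)"
  define N :: real where "N = 2 ^ card (UNIV::'x set)"
  have N0: "N > 0" unfolding N_def by simp
  have hA: "\<forall>S. A S = A (S \<inter> dep g)" unfolding A_def using tau_local[OF ii] by blast
  have hB: "\<forall>S. B S = B (S \<inter> dep h)" unfolding B_def using tau_local[OF ii] by blast
  have "dep g \<inter> dep h = {}" using dj by blast
  from indep_sum[OF finite_UNIV this hA hB]
  have ind: "N * (\<Sum>S\<in>Pow UNIV. A S * B S) = (\<Sum>S\<in>Pow UNIV. A S) * (\<Sum>S\<in>Pow UNIV. B S)"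
    unfolding N_def .
  have "banzhaf x (\<tau> f) = (1 / N) * (\<Sum>S\<in>Pow UNIV. A S * B S)"
    unfolding banzhaf_full N_def pf A_def B_def ..
  also have "\<dots> = (1 / N) * (\<Sum>S\<in>Pow UNIV. A S) * ((1 / N) * (\<Sum>S\<in>Pow UNIV. B S))"
    using ind N0 by (simp add: field_simps)
  also have "\<dots> = banzhaf x (\<tau> g) * banzhaf xg (\<tau> h)"
    unfolding banzhaf_full N_def A_def B_def ..
  finally show ?thesis .
qed

lemma witness_h:
  assumes "modular f g \<or> mono_modular f g"
  obtains l z where "mod_witness f g l z"
    "mod_subst f g xg = (\<lambda>u. (u xg \<and> cof l z True u) \<or> (\<not> u xg \<and> cof l z False u))"
proof -
  have "\<exists>w. mod_witness f g (fst w) (snd w)"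
    using assms unfolding modular_def mono_modular_def by auto
  define w where "w = (SOME w. mod_witness f g (fst w) (snd w))"
  have W: "mod_witness f g (fst w) (snd w)"
    unfolding w_def using \<open>\<exists>w. _\<close> by (rule someI_ex)
  have H: "mod_subst f g xg = (\<lambda>u. (u xg \<and> cof (fst w) (snd w) True u) \<or> (\<not> u xg \<and> cof (fst w) (snd w) False u))"
    unfolding mod_subst_def mod_cof_def Let_def w_def ..
  show ?thesis by (rule that[OF W H])
qed

lemma chain_common:
  fixes \<tau> :: "('x::finite) cgm"
  assumes ii: "importance_inducing \<tau>"
    and m: "modular f g \<or> mono_modular f g" and xg: "xg \<notin> dep f"
    and pf: "pd x (\<tau> f) = (\<lambda>S. pd x (\<tau> g) S * pd xg (\<tau> (mod_subst f g xg)) S)"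
  shows "banzhaf x (\<tau> f) = banzhaf x (\<tau> g) * banzhaf xg (\<tau> (mod_subst f g xg))"
proof -
  obtain l z where w: "mod_witness f g l z"
    and h: "mod_subst f g xg = (\<lambda>u. (u xg \<and> cof l z True u) \<or> (\<not> u xg \<and> cof l z False u))"
    by (rule witness_h[OF m])
  have "dep (mod_subst f g xg) \<inter> dep g = {}"
  proof (rule dep_disj[of l g f z xg])
    show "dep l \<inter> dep g = {}" using w unfolding mod_witness_def by (rule conjunct1)
    show "f = subst l z g" using w unfolding mod_witness_def by (rule conjunct2)
  qed (fact xg, fact h)
  then show ?thesis using bz_chain[where \<tau>=\<tau> and x=x and f=f and g=g and xg=xg and h="mod_subst f g xg"] ii pf by blast
qed

lemma perm_sum:
  fixes \<tau> :: "('x::finite) cgm"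
  assumes b: "bij \<sigma>" and t: "\<forall>S. \<tau> f S = \<tau> (perm_bfun \<sigma> f) (\<sigma> ` S)"
  shows "(\<Sum>S\<in>Pow (UNIV - {\<sigma> x}). c (card S) * pd (\<sigma> x) (\<tau> (perm_bfun \<sigma> f)) S)
       = (\<Sum>S\<in>Pow (UNIV - {x}). c (card S) * pd x (\<tau> f) S)"
proof -
  have inj: "inj \<sigma>" using b by (simp add: bij_is_inj)
  have bb: "bij_betw \<sigma> (UNIV - {x}) (UNIV - {\<sigma> x})"
    using b unfolding bij_betw_def bij_def inj_on_def by (auto simp: image_iff)
  have bP: "bij_betw (image \<sigma>) (Pow (UNIV - {x})) (Pow (UNIV - {\<sigma> x}))"
    by (rule bij_betw_Pow[OF bb])
  have eq: "c (card (\<sigma> ` S)) * pd (\<sigma> x) (\<tau> (perm_bfun \<sigma> f)) (\<sigma> ` S) = c (card S) * pd x (\<tau> f) S" for S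
  proof -
    have c1: "card (\<sigma> ` S) = card S" using inj by (simp add: card_image inj_on_subset)
    have c2: "\<sigma> ` S \<union> {\<sigma> x} = \<sigma> ` (S \<union> {x})" by auto
    have c3: "\<sigma> ` S - {\<sigma> x} = \<sigma> ` (S - {x})" using inj by (simp add: image_set_diff)
    have "pd (\<sigma> x) (\<tau> (perm_bfun \<sigma> f)) (\<sigma> ` S) = pd x (\<tau> f) S"
      unfolding pd_def c2 c3 using t[rule_format, of "S \<union> {x}"] t[rule_format, of "S - {x}"] by simp
    then show ?thesis using c1 by simp
  qed
  show ?thesis
    using sum.reindex_bij_betw[OF bP, of "\<lambda>S. c (card S) * pd (\<sigma> x) (\<tau> (perm_bfun \<sigma> f)) S"]
    unfolding eq by simp
qed

theorem mainTheorem11: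
  fixes \<tau> :: "('x::finite) cgm" and E :: "'x \<Rightarrow> 'x game \<Rightarrow> real"
  assumes "importance_inducing \<tau>"
    and "expectation_of_contributions E"
  shows "IVF (comp_vf E \<tau>) \<and>
    (unbiased_cgm \<tau> \<longrightarrow> unbiased (comp_vf E \<tau>)) \<and>
    (deriv_dependent_cgm \<tau> \<longrightarrow> deriv_dependent (comp_vf E \<tau>)) \<and>
    (chain_rule_decomp_cgm \<tau> \<longrightarrow> chain_rule_decomp (comp_vf banzhaf \<tau>)) \<and>
    (weak_chain_rule_decomp_cgm \<tau> \<longrightarrow> weak_chain_rule_decomp (comp_vf banzhaf \<tau>))"
proof -
  note ii = assms(1)
  note iu = assms(1)[unfolded importance_inducing_def]
  note i1 = iu[THEN conjunct1]
  note i2 = iu[THEN conjunct2, THEN conjunct1]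
  note i3 = iu[THEN conjunct2, THEN conjunct2, THEN conjunct1]
  note i4 = iu[THEN conjunct2, THEN conjunct2, THEN conjunct2, THEN conjunct1]
  note i5 = iu[THEN conjunct2, THEN conjunct2, THEN conjunct2, THEN conjunct2, THEN conjunct1]
  note i6 = iu[THEN conjunct2, THEN conjunct2, THEN conjunct2, THEN conjunct2, THEN conjunct2]
  obtain c :: "nat \<Rightarrow> real" where c0: "\<And>(x::'x) S. S \<subseteq> UNIV - {x} \<Longrightarrow> 0 \<le> c (card S)"
    and c1: "\<And>x::'x. (\<Sum>S \<in> Pow (UNIV - {x}). c (card S)) = 1"
    and cE: "\<And>x v. E x v = (\<Sum>S \<in> Pow (UNIV - {x}). c (card S) * pd x v S)"
    using assms(2) unfolding expectation_of_contributions_def by blast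
  have mono: "E x v \<le> E x w" if "\<And>S. pd x v S \<le> pd x w S" for x :: 'x and v w
    unfolding cE by (rule sum_mono) (use c0 that in \<open>auto intro: mult_left_mono\<close>)
  have const: "E x v = r" if "pd x v = (\<lambda>S. r)" for x :: 'x and v r
  proof -
    have "E x v = (\<Sum>S \<in> Pow (UNIV - {x}). c (card S)) * r"
      unfolding cE that by (simp add: sum_distrib_right)
    then show ?thesis using c1 by simp
  qed
  have IVF: "IVF (comp_vf E \<tau>)"
    unfolding IVF_def comp_vf_def
  proof (intro conjI allI impI)
    fix x :: 'x and f
    have p0: "0 \<le> pd x (\<tau> f) S" and p1: "pd x (\<tau> f) S \<le> 1" for S using i1 by auto
    show "0 \<le> E x (\<tau> f)" unfolding cE
      by (rule sum_nonneg) (use c0 p0 in \<open>auto intro: mult_nonneg_nonneg\<close>)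
    have "E x (\<tau> f) \<le> (\<Sum>S \<in> Pow (UNIV - {x}). c (card S))" unfolding cE
      by (rule sum_mono) (use c0 p1 in \<open>auto intro: mult_left_le\<close>)
    then show "E x (\<tau> f) \<le> 1" using c1 by simp
  next
    fix x :: 'x and f assume "x \<notin> dep f"
    then show "E x (\<tau> f) = 0" using i2 by (intro const) blast
  next
    fix x :: 'x
    show "E x (\<tau> (var x)) = 1" "E x (\<tau> (\<lambda>u. \<not> var x u)) = 1"
      using i3 by (auto intro!: const)
  next
    fix x :: 'x and f and \<sigma> :: "'x \<Rightarrow> 'x" assume b: "bij \<sigma>"
    have t: "\<forall>S. \<tau> f S = \<tau> (perm_bfun \<sigma> f) (\<sigma> ` S)" using i4 b by blast
    show "E x (\<tau> f) = E (\<sigma> x) (\<tau> (perm_bfun \<sigma> f))"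
      unfolding cE using perm_sum[OF b t, of c x] by simp
  next
    fix x y :: 'x and f
    have "\<tau> f = \<tau> (flip f y)" using i5 by (auto simp: fun_eq_iff)
    then show "E x (\<tau> f) = E x (\<tau> (flip f y))" by simp
  next
    fix x :: 'x and f g h
    assume "mono_modular f g \<and> mono_modular h g \<and> mod_cof h g True \<le> mod_cof f g True \<and>
        mod_cof f g False \<le> mod_cof h g False \<and> x \<in> dep g"
    then have "pd x (\<tau> h) \<le> pd x (\<tau> f)" using i6 by blast
    then show "E x (\<tau> h) \<le> E x (\<tau> f)" by (intro mono) (simp add: le_fun_def)
  qed
  have UB: "unbiased_cgm \<tau> \<longrightarrow> unbiased (comp_vf E \<tau>)"
    unfolding unbiased_cgm_def unbiased_def comp_vf_def
  proof (intro impI allI)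
    fix x :: 'x and g
    assume H: "\<forall>g. \<tau> g = \<tau> (\<lambda>u. \<not> g u)"
    have "\<tau> g = \<tau> (\<lambda>u. \<not> g u)" using H by (rule spec)
    then show "E x (\<tau> g) = E x (\<tau> (\<lambda>u. \<not> g u))" by (rule arg_cong)
  qed
  have DD: "deriv_dependent_cgm \<tau> \<longrightarrow> deriv_dependent (comp_vf E \<tau>)"
    unfolding deriv_dependent_cgm_def deriv_dependent_def comp_vf_def
  proof (intro impI allI)
    fix x :: 'x and f g
    assume H: "\<forall>x f g. Dx x g \<le> Dx x f \<longrightarrow> pd x (\<tau> g) \<le> pd x (\<tau> f)"
      and D: "Dx x g \<le> Dx x f"
    have "pd x (\<tau> g) \<le> pd x (\<tau> f)" using H D by blast
    then show "E x (\<tau> g) \<le> E x (\<tau> f)" by (intro mono) (simp add: le_fun_def)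
  qed
  have CR: "chain_rule_decomp_cgm \<tau> \<longrightarrow> chain_rule_decomp (comp_vf banzhaf \<tau>)"
    unfolding chain_rule_decomp_cgm_def chain_rule_decomp_def comp_vf_def
  proof (intro impI allI)
    fix f g and x xg :: 'x
    assume H: "\<forall>f g x xg. modular f g \<and> x \<in> dep g \<and> xg \<notin> dep f \<longrightarrow>
      pd x (\<tau> f) = (\<lambda>S. pd x (\<tau> g) S * pd xg (\<tau> (mod_subst f g xg)) S)"
      and A: "modular f g \<and> x \<in> dep g \<and> xg \<notin> dep f"
    have pf: "pd x (\<tau> f) = (\<lambda>S. pd x (\<tau> g) S * pd xg (\<tau> (mod_subst f g xg)) S)"
      using H A by blast
    have m: "modular f g \<or> mono_modular f g" using A by blast
    show "banzhaf x (\<tau> f) = banzhaf x (\<tau> g) * banzhaf xg (\<tau> (mod_subst f g xg))"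
      using chain_common[where \<tau>=\<tau> and f=f and g=g and xg=xg and x=x] ii m A pf by blast
  qed
  have WCR: "weak_chain_rule_decomp_cgm \<tau> \<longrightarrow> weak_chain_rule_decomp (comp_vf banzhaf \<tau>)"
    unfolding weak_chain_rule_decomp_cgm_def weak_chain_rule_decomp_def comp_vf_def
  proof (intro impI allI)
    fix f g and x xg :: 'x
    assume H: "\<forall>f g x xg. mono_modular f g \<and> x \<in> dep g \<and> xg \<notin> dep f \<longrightarrow>
      pd x (\<tau> f) = (\<lambda>S. pd x (\<tau> g) S * pd xg (\<tau> (mod_subst f g xg)) S)"
      and A: "mono_modular f g \<and> x \<in> dep g \<and> xg \<notin> dep f"
    have pf: "pd x (\<tau> f) = (\<lambda>S. pd x (\<tau> g) S * pd xg (\<tau> (mod_subst f g xg)) S)"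
      using H A by blast
    have m: "modular f g \<or> mono_modular f g" using A by blast
    show "banzhaf x (\<tau> f) = banzhaf x (\<tau> g) * banzhaf xg (\<tau> (mod_subst f g xg))"
      using chain_common[where \<tau>=\<tau> and f=f and g=g and xg=xg and x=x] ii m A pf by blast
  qed
  show ?thesis using IVF UB DD CR WCR by blast
qed

end
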